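(* Let $\mathcal{R}=(\Sigma,V,\geq_s,\Delta)$ be the term rewriting system described in the context. For every term $\tau\in T[\Sigma,V]$ in normal form (i.e. no rule of $\Delta$ is applicable to any subterm occurrence of $\tau$), $\tau$ is a polynomial $m_1\oplus\cdots\oplus m_k$ such that (1) $m_i>_p m_{i+1}$ for all $i\in[1,k-1]$, and (2) for every monomial $m_i=\alpha_1\cdots\alpha_h$, $\alpha_j\geq_l\alpha_{j+1}$ for all $j\in[1,h-1]$.
   Context: $\mathbb{F}=\mathbb{GF}(2^n)$. Signature $\Sigma=\mathbb{F}\cup\{\oplus,\otimes,f_1,\dots,f_t\}$: elements of $\mathbb{F}$ are constants, $\oplus,\otimes$ binary (field addition and multiplication), $f_1,\dots,f_t$ unary symbols for affine transformations, each $f$ having an associated affine constant $c_f\in\mathbb{F}$ (meaning $f(x\oplus y)=f(x)\oplus f(y)\oplus c_f$ for all $x,y$). $V$ is a set of variables, $\Sigma\cap V=\emptyset$, and $\geq_s$ is a total order on $V\uplus\Sigma$. Terms $T[\Sigma,V]$: smallest set containing $\mathbb{F}\cup V$ and closed under $\oplus$, $\otimes$, $f_j$; $T_{\backslash\oplus}(\Sigma,V)$ = terms not using $\oplus$. A factor is a term in $\mathbb{F}\cup V$ or of the form $f_i(\tau')$ with $\tau'\in T_{\backslash\oplus}(\Sigma,V)$; a monomial is a product $\alpha_1\otimes\cdots\otimes\alpha_k$ ($k\ge1$) of nonzero factors; a polynomial is a sum $m_1\oplus\cdots\oplus m_k$ of monomials (sums and products are treated as flat sequences). Factor order $\geq_l$: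 $\alpha\geq_l\alpha'$ iff (i) $\alpha,\alpha'\in\mathbb{F}\cup V$ and $\alpha\geq_s\alpha'$; or (ii) $\alpha=f(\tau)$, $\alpha'=f'(\tau')$ with $f\geq_s f'$, or $f=f'$ and $\tau\geq_p\tau'$; or (iii) $\alpha=f(\tau)$ and $f\geq_s\alpha'$, or $\alpha'=f(\tau)$ and $\alpha\geq_s f$. Monomial order $\geq_p$: lexicographic comparison (w.r.t. $\geq_l$) of the factor sequences sorted in descending $\geq_l$-order; $m>_p m'$ means $m\geq_p m'$ and the sorted factor sequences differ. Rules $\Delta$ (with $\tau,\tau_1,\tau_2$ terms, $m_i$ monomials, $\alpha_i$ factors, $f$ an affine symbol with constant $c$): R1: $m_1\oplus\cdots\oplus m_k\mapsto m'_1\oplus\cdots\oplus m'_k$ where $(m'_1,\dots,m'_k)={\tt sort}_{\geq_p}(m_1,\dots,m_k)\neq(m_1,\dots,m_k)$; R2: $\alpha_1\cdots\alpha_k\mapsto\alpha'_1\cdots\alpha'_k$ where $(\alpha'_1,\dots,\alpha'_k)={\tt sort}_{\geq_l}(\alpha_1,\dots,\alpha_k)\neq(\alpha_1,\dots,\alpha_k)$; R3: $\tau\oplus\tau\mapsto0$; R4: $\tau\otimes0\mapsto0$; R5: $0\otimes\tau\mapsto0$; R6: $\tau\oplus0\mapsto\tau$; R7: $0\oplus\tau\mapsto\tau$; R8: $\tau\otimes1\mapsto\tau$; R9: $1\otimes\tau\mapsto\tau$; R10: $(\tau_1\oplus\tau_2)\otimes\tau\mapsto(\tau_1\otimes\tau)\oplus(\tau_2\otimes\tau)$;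 R11: $\tau\otimes(\tau_1\oplus\tau_2)\mapsto(\tau\otimes\tau_1)\oplus(\tau\otimes\tau_2)$; R12: $f(\tau_1\oplus\tau_2)\mapsto f(\tau_1)\oplus f(\tau_2)\oplus c$; R13: $f(0)\mapsto c$. A rewriting step replaces one occurrence of a subterm matching a left-hand side by the corresponding right-hand side. *)

theory Defs
  imports Main "HOL-Library.Sublist"
begin

text \<open>Symbols of V \<uplus> Sigma: field constants, variables, the two binary symbols, affine symbols.\<close>
datatype ('a, 'v, 'f) sym = SC 'a | SV 'v | SPlus | STimes | SF 'f

text \<open>Terms; sums and products are flat sequences (see wf_term).\<close>
datatype ('a, 'v, 'f) trm =
    Cst 'a
  | Var 'v
  | Sum "('a, 'v, 'f) trm list"
  | Prod "('a, 'v, 'f) trm list"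
  | App 'f "('a, 'v, 'f) trm"

fun is_sum :: "('a, 'v, 'f) trm \<Rightarrow> bool" where
  "is_sum (Sum _) = True"
| "is_sum _ = False"

fun is_prod :: "('a, 'v, 'f) trm \<Rightarrow> bool" where
  "is_prod (Prod _) = True"
| "is_prod _ = False"

fun wf_term :: "('a, 'v, 'f) trm \<Rightarrow> bool" where
  "wf_term (Cst c) = True"
| "wf_term (Var v) = True"
| "wf_term (Sum xs) = (2 \<le> length xs \<and> (\<forall>x\<in>set xs. wf_term x \<and> \<not> is_sum x))"
| "wf_term (Prod xs) = (2 \<le> length xs \<and> (\<forall>x\<in>set xs. wf_term x \<and> \<not> is_prod x))"
| "wf_term (App f t) = wf_term t"

fun sum_args :: "('a, 'v, 'f) trm \<Rightarrow> ('a, 'v, 'f) trm list" where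
  "sum_args (Sum xs) = xs"
| "sum_args t = [t]"

fun prod_args :: "('a, 'v, 'f) trm \<Rightarrow> ('a, 'v, 'f) trm list" where
  "prod_args (Prod xs) = xs"
| "prod_args t = [t]"

definition plus :: "('a, 'v, 'f) trm \<Rightarrow> ('a, 'v, 'f) trm \<Rightarrow> ('a, 'v, 'f) trm" where
  "plus s t = Sum (sum_args s @ sum_args t)"

definition times :: "('a, 'v, 'f) trm \<Rightarrow> ('a, 'v, 'f) trm \<Rightarrow> ('a, 'v, 'f) trm" where
  "times s t = Prod (prod_args s @ prod_args t)"

fun no_plus :: "('a, 'v, 'f) trm \<Rightarrow> bool" where
  "no_plus (Cst c) = True"
| "no_plus (Var v) = True"
| "no_plus (Sum xs) = False"
| "no_plus (Prod xs) = (\<forall>x\<in>set xs. no_plus x)"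
| "no_plus (App f t) = no_plus t"

fun is_factor :: "('a, 'v, 'f) trm \<Rightarrow> bool" where
  "is_factor (Cst c) = True"
| "is_factor (Var v) = True"
| "is_factor (App f t) = no_plus t"
| "is_factor _ = False"

text \<open>The product of a nonempty sequence of terms (a single factor is a product with k = 1).\<close>
fun prod_of :: "('a, 'v, 'f) trm list \<Rightarrow> ('a, 'v, 'f) trm" where
  "prod_of [x] = x"
| "prod_of xs = Prod xs"

text \<open>The sum of a sequence of monomials; the empty sum (k = 0) is the constant 0.\<close>
fun sum_of :: "('a::zero, 'v, 'f) trm list \<Rightarrow> ('a, 'v, 'f) trm" where
  "sum_of [] = Cst 0"
| "sum_of [x] = x"
| "sum_of xs = Sum xs"

definition is_monomial :: "('a::zero, 'v, 'f) trm \<Rightarrow> bool" where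
  "is_monomial m = (\<exists>as. as \<noteq> [] \<and> m = prod_of as \<and>
      (\<forall>a\<in>set as. is_factor a \<and> a \<noteq> Cst 0))"

abbreviation mfactors :: "('a, 'v, 'f) trm \<Rightarrow> ('a, 'v, 'f) trm list" where
  "mfactors m \<equiv> prod_args m"

fun ins_by :: "('b \<Rightarrow> 'b \<Rightarrow> bool) \<Rightarrow> 'b \<Rightarrow> 'b list \<Rightarrow> 'b list" where
  "ins_by r x [] = [x]"
| "ins_by r x (y # ys) = (if r x y then x # y # ys else y # ins_by r x ys)"

definition sort_by :: "('b \<Rightarrow> 'b \<Rightarrow> bool) \<Rightarrow> 'b list \<Rightarrow> 'b list" where
  "sort_by r xs = foldr (ins_by r) xs []"

fun lex_ge :: "('b \<Rightarrow> 'b \<Rightarrow> bool) \<Rightarrow> 'b list \<Rightarrow> 'b list \<Rightarrow> bool" where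
  "lex_ge r [] [] = True"
| "lex_ge r (x # xs) [] = True"
| "lex_ge r [] (y # ys) = False"
| "lex_ge r (x # xs) (y # ys) = (if x = y then lex_ge r xs ys else r x y)"

definition gep_with :: "(('a, 'v, 'f) trm \<Rightarrow> ('a, 'v, 'f) trm \<Rightarrow> bool)
    \<Rightarrow> ('a, 'v, 'f) trm \<Rightarrow> ('a, 'v, 'f) trm \<Rightarrow> bool" where
  "gep_with r m m' = lex_ge r (sort_by r (prod_args m)) (sort_by r (prod_args m'))"

text \<open>Factor order with a recursion-depth (fuel) parameter; the mutual recursion
  between \<ge>l and \<ge>p is on strictly smaller terms, so fuel size a + size b + 1 suffices.\<close>
fun gel_fuel :: "nat \<Rightarrow> (('a, 'v, 'f) sym \<Rightarrow> ('a, 'v, 'f) sym \<Rightarrow> bool)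
    \<Rightarrow> ('a, 'v, 'f) trm \<Rightarrow> ('a, 'v, 'f) trm \<Rightarrow> bool" where
  "gel_fuel 0 ge a b = False"
| "gel_fuel (Suc d) ge a b =
     (case a of
        Cst c \<Rightarrow> (case b of Cst c' \<Rightarrow> ge (SC c) (SC c') | Var v' \<Rightarrow> ge (SC c) (SV v')
                   | App g u \<Rightarrow> ge (SC c) (SF g) | _ \<Rightarrow> False)
      | Var v \<Rightarrow> (case b of Cst c' \<Rightarrow> ge (SV v) (SC c') | Var v' \<Rightarrow> ge (SV v) (SV v')
                   | App g u \<Rightarrow> ge (SV v) (SF g) | _ \<Rightarrow> False)
      | App f t \<Rightarrow> (case b of Cst c' \<Rightarrow> ge (SF f) (SC c') | Var v' \<Rightarrow> ge (SF f) (SV v')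
                   | App g u \<Rightarrow> (f \<noteq> g \<and> ge (SF f) (SF g)) \<or> (f = g \<and> gep_with (gel_fuel d ge) t u)
                   | _ \<Rightarrow> False)
      | _ \<Rightarrow> False)"

definition ge_l :: "(('a, 'v, 'f) sym \<Rightarrow> ('a, 'v, 'f) sym \<Rightarrow> bool)
    \<Rightarrow> ('a, 'v, 'f) trm \<Rightarrow> ('a, 'v, 'f) trm \<Rightarrow> bool" where
  "ge_l ge a b = gel_fuel (size a + size b + 1) ge a b"

definition ge_p :: "(('a, 'v, 'f) sym \<Rightarrow> ('a, 'v, 'f) sym \<Rightarrow> bool)
    \<Rightarrow> ('a, 'v, 'f) trm \<Rightarrow> ('a, 'v, 'f) trm \<Rightarrow> bool" where
  "ge_p ge m m' = gep_with (ge_l ge) m m'"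

definition gt_p :: "(('a, 'v, 'f) sym \<Rightarrow> ('a, 'v, 'f) sym \<Rightarrow> bool)
    \<Rightarrow> ('a, 'v, 'f) trm \<Rightarrow> ('a, 'v, 'f) trm \<Rightarrow> bool" where
  "gt_p ge m m' = (ge_p ge m m' \<and>
      sort_by (ge_l ge) (prod_args m) \<noteq> sort_by (ge_l ge) (prod_args m'))"

definition total_order :: "('b \<Rightarrow> 'b \<Rightarrow> bool) \<Rightarrow> bool" where
  "total_order r = ((\<forall>x. r x x) \<and> (\<forall>x y. r x y \<and> r y x \<longrightarrow> x = y)
      \<and> (\<forall>x y z. r x y \<and> r y z \<longrightarrow> r x z) \<and> (\<forall>x y. r x y \<or> r y x))"

text \<open>Subterms at occurrences; in a flat sum/product every contiguous subsequence of
  length at least 2 is a subterm (associativity).\<close>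
fun occs :: "('a, 'v, 'f) trm \<Rightarrow> ('a, 'v, 'f) trm set" where
  "occs (Cst c) = {Cst c}"
| "occs (Var v) = {Var v}"
| "occs (Sum xs) = {Sum ys | ys. sublist ys xs \<and> 2 \<le> length ys} \<union> (\<Union>x\<in>set xs. occs x)"
| "occs (Prod xs) = {Prod ys | ys. sublist ys xs \<and> 2 \<le> length ys} \<union> (\<Union>x\<in>set xs. occs x)"
| "occs (App f t) = insert (App f t) (occs t)"

definition redex :: "(('a::{zero,one}, 'v, 'f) sym \<Rightarrow> ('a, 'v, 'f) sym \<Rightarrow> bool)
    \<Rightarrow> ('a, 'v, 'f) trm \<Rightarrow> bool" where
  "redex ge s =
     ((\<exists>ms. s = Sum ms \<and> (\<forall>m\<in>set ms. is_monomial m) \<and> sort_by (ge_p ge) ms \<noteq> ms)  \<comment> \<open>R1\<close>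
    \<or> (\<exists>as. s = Prod as \<and> (\<forall>a\<in>set as. is_factor a) \<and> sort_by (ge_l ge) as \<noteq> as)  \<comment> \<open>R2\<close>
    \<or> (\<exists>t. wf_term t \<and> s = plus t t)  \<comment> \<open>R3\<close>
    \<or> (\<exists>t. wf_term t \<and> s = times t (Cst 0))  \<comment> \<open>R4\<close>
    \<or> (\<exists>t. wf_term t \<and> s = times (Cst 0) t)  \<comment> \<open>R5\<close>
    \<or> (\<exists>t. wf_term t \<and> s = plus t (Cst 0))  \<comment> \<open>R6\<close>
    \<or> (\<exists>t. wf_term t \<and> s = plus (Cst 0) t)  \<comment> \<open>R7\<close>
    \<or> (\<exists>t. wf_term t \<and> s = times t (Cst 1))  \<comment> \<open>R8\<close>
    \<or> (\<exists>t. wf_term t \<and> s = times (Cst 1) t)  \<comment> \<open>R9\<close>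
    \<or> (\<exists>t1 t2 t. wf_term t1 \<and> wf_term t2 \<and> wf_term t \<and> s = times (plus t1 t2) t)  \<comment> \<open>R10\<close>
    \<or> (\<exists>t1 t2 t. wf_term t1 \<and> wf_term t2 \<and> wf_term t \<and> s = times t (plus t1 t2))  \<comment> \<open>R11\<close>
    \<or> (\<exists>f t1 t2. wf_term t1 \<and> wf_term t2 \<and> s = App f (plus t1 t2))  \<comment> \<open>R12\<close>
    \<or> (\<exists>f. s = App f (Cst 0)))  \<comment> \<open>R13\<close>"

definition normal_form :: "(('a::{zero,one}, 'v, 'f) sym \<Rightarrow> ('a, 'v, 'f) sym \<Rightarrow> bool)
    \<Rightarrow> ('a, 'v, 'f) trm \<Rightarrow> bool" where
  "normal_form ge t = (\<forall>s\<in>occs t. \<not> redex ge s)"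

end

theory Submission
  imports Defs
begin

lemma succ_nth:
  "successively P xs \<Longrightarrow> Suc j < length xs \<Longrightarrow> P (xs ! j) (xs ! Suc j)"
proof (induction P xs arbitrary: j rule: successively.induct)
  case (3 P x y xs)
  then show ?case by (cases j) auto
qed auto

lemma set_ins_by: "set (ins_by r x ys) = insert x (set ys)"
  by (induction ys) auto

lemma set_sort_by: "set (sort_by r xs) = set xs"
  by (induction xs) (auto simp: sort_by_def set_ins_by)

lemma ins_by_succ:
  assumes tot: "\<And>a b. a \<in> insert x (set ys) \<Longrightarrow> b \<in> insert x (set ys) \<Longrightarrow> r a b \<or> r b a"
    and s: "successively r ys"
  shows "successively r (ins_by r x ys)"
  using assms
proof (induction ys)
  case Nil
  then show ?case by simp
next
  case (Cons y ys)
  show ?case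
  proof (cases "r x y")
    case True
    then show ?thesis using Cons.prems by simp
  next
    case False
    have ryx: "r y x" using Cons.prems(1)[of x y] False by auto
    have IH: "successively r (ins_by r x ys)"
      using Cons.IH Cons.prems by (auto simp: successively_Cons)
    have "ys = [] \<or> (\<exists>z zs. ys = z # zs)" by (cases ys) auto
    then show ?thesis
    proof
      assume "ys = []" then show ?thesis using False ryx by simp
    next
      assume "\<exists>z zs. ys = z # zs"
      then obtain z zs where ys: "ys = z # zs" by blast
      show ?thesis
      proof (cases "r x z")
        case True
        then show ?thesis using False ryx IH ys by simp
      next
        case False2: False
        have "r y z" using Cons.prems(2) ys by simp
        then show ?thesis using False False2 IH ys by simp
      qed
    qed
  qed
qed

lemma sort_by_succ:
  assumes "\<And>a b. a \<in> set xs \<Longrightarrow> b \<in> set xs \<Longrightarrow> r a b \<or> r b a"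
  shows "successively r (sort_by r xs)"
  using assms
proof (induction xs)
  case Nil
  then show ?case by (simp add: sort_by_def)
next
  case (Cons x xs)
  have "successively r (sort_by r xs)" using Cons by auto
  moreover have "sort_by r (x # xs) = ins_by r x (sort_by r xs)" by (simp add: sort_by_def)
  ultimately show ?case using Cons.prems ins_by_succ[of x "sort_by r xs" r]
    by (simp add: set_sort_by)
qed

lemma lex_ge_total:
  assumes "\<And>a b. a \<in> set xs \<Longrightarrow> b \<in> set ys \<Longrightarrow> r a b \<or> r b a"
  shows "lex_ge r xs ys \<or> lex_ge r ys xs"
  using assms
proof (induction xs arbitrary: ys)
  case Nil
  then show ?case by (cases ys) auto
next
  case (Cons x xs)
  then show ?case by (cases ys) auto
qed

definition PF :: "('a, 'v, 'f) trm \<Rightarrow> bool" where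
  "PF x = (wf_term x \<and> no_plus x \<and> \<not> is_prod x)"

lemma prod_args_PF:
  assumes "wf_term t" "no_plus t"
  shows "\<forall>x\<in>set (prod_args t). PF x"
  using assms by (cases t) (auto simp: PF_def)

lemma size_prod_args: "x \<in> set (prod_args t) \<Longrightarrow> size x \<le> size t"
proof (cases t)
  case (Prod xs)
  assume "x \<in> set (prod_args t)"
  then have "x \<in> set xs" using Prod by simp
  then have "size x \<le> size_list size xs" by (rule size_list_estimation') simp
  then show ?thesis using Prod by simp
qed auto

lemma gel_total:
  assumes tot: "\<And>x y. ge x y \<or> ge y x"
  shows "PF a \<Longrightarrow> PF b \<Longrightarrow> size a + size b < d \<Longrightarrow> gel_fuel d ge a b \<or> gel_fuel d ge b a"
proof (induction d arbitrary: a b)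
  case 0
  then show ?case by simp
next
  case (Suc d)
  show ?case
  proof (cases a)
    case (Cst c)
    then show ?thesis using Suc.prems tot by (cases b) (auto simp: PF_def)
  next
    case (Var v)
    then show ?thesis using Suc.prems tot by (cases b) (auto simp: PF_def)
  next
    case (Sum xs)
    then show ?thesis using Suc.prems by (auto simp: PF_def)
  next
    case (Prod xs)
    then show ?thesis using Suc.prems by (auto simp: PF_def)
  next
    case (App f t)
    note a = App
    show ?thesis
    proof (cases b)
      case (Cst c)
      then show ?thesis using a tot by auto
    next
      case (Var v)
      then show ?thesis using a tot by auto
    next
      case (Sum xs)
      then show ?thesis using Suc.prems by (auto simp: PF_def)
    next
      case (Prod xs)
      then show ?thesis using Suc.prems by (auto simp: PF_def)
    next
      case (App g u)
      note b = App
      show ?thesis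
      proof (cases "f = g")
        case False
        then show ?thesis using a b tot[of "SF f" "SF g"] by auto
      next
        case True
        have pt: "\<forall>x\<in>set (prod_args t). PF x"
          using Suc.prems a by (intro prod_args_PF) (auto simp: PF_def)
        have pu: "\<forall>x\<in>set (prod_args u). PF x"
          using Suc.prems b by (intro prod_args_PF) (auto simp: PF_def)
        have "gep_with (gel_fuel d ge) t u \<or> gep_with (gel_fuel d ge) u t"
          unfolding gep_with_def
        proof (rule lex_ge_total)
          fix x y
          assume "x \<in> set (sort_by (gel_fuel d ge) (prod_args t))"
             and "y \<in> set (sort_by (gel_fuel d ge) (prod_args u))"
          then have xt: "x \<in> set (prod_args t)" and yu: "y \<in> set (prod_args u)"
            by (auto simp: set_sort_by)
          have "size x + size y < d"
            using size_prod_args[OF xt] size_prod_args[OF yu] Suc.prems(3) a b by simp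
          then show "gel_fuel d ge x y \<or> gel_fuel d ge y x"
            using Suc.IH pt pu xt yu by blast
        qed
        then show ?thesis using a b True by auto
      qed
    qed
  qed
qed

lemma gel_total':
  assumes "total_order ge" "PF a" "PF b"
  shows "ge_l ge a b \<or> ge_l ge b a"
proof -
  have tot: "\<And>x y. ge x y \<or> ge y x" using assms(1) unfolding total_order_def by blast
  show ?thesis unfolding ge_l_def
    using gel_total[OF tot, of a b "size a + size b + 1"] assms(2,3)
    by (simp add: add.commute)
qed



lemma occ_self: "wf_term t \<Longrightarrow> t \<in> occs t"
  by (cases t) auto

lemma nf_self: "wf_term t \<Longrightarrow> normal_form ge t \<Longrightarrow> \<not> redex ge t"
  unfolding normal_form_def using occ_self by blast

lemma nf_Sum: "normal_form ge (Sum xs) \<Longrightarrow> x \<in> set xs \<Longrightarrow> normal_form ge x"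
  unfolding normal_form_def by auto

lemma nf_Prod: "normal_form ge (Prod xs) \<Longrightarrow> x \<in> set xs \<Longrightarrow> normal_form ge x"
  unfolding normal_form_def by auto

lemma nf_App: "normal_form ge (App f t) \<Longrightarrow> normal_form ge t"
  unfolding normal_form_def by auto

lemma sublist_adj: "Suc i < length xs \<Longrightarrow> sublist [xs ! i, xs ! Suc i] xs"
proof -
  assume a: "Suc i < length xs"
  have "xs = take i xs @ [xs ! i, xs ! Suc i] @ drop (Suc (Suc i)) xs"
    using a by (metis Cons_nth_drop_Suc Suc_lessD append_Cons append_self_conv2 id_take_nth_drop)
  then show ?thesis by (metis sublist_appendI)
qed

lemma nf_Sum_adj: "normal_form ge (Sum xs) \<Longrightarrow> Suc i < length xs \<Longrightarrow> \<not> redex ge (Sum [xs ! i, xs ! Suc i])"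
  unfolding normal_form_def using sublist_adj[of i xs] by fastforce

lemma nf_Prod_adj: "normal_form ge (Prod xs) \<Longrightarrow> Suc i < length xs \<Longrightarrow> \<not> redex ge (Prod [xs ! i, xs ! Suc i])"
  unfolding normal_form_def using sublist_adj[of i xs] by fastforce

lemma neighbor:
  assumes "2 \<le> length xs" "x \<in> set xs"
  shows "\<exists>i. Suc i < length xs \<and> (xs ! i = x \<or> xs ! Suc i = x)"
proof -
  obtain i where i: "i < length xs" "xs ! i = x" using assms(2) by (metis in_set_conv_nth)
  show ?thesis
  proof (cases "Suc i < length xs")
    case True then show ?thesis using i by blast
  next
    case False
    then have "i = Suc (i - 1)" using i assms(1) by simp
    then show ?thesis using i by (metis Suc_lessD lessI)
  qed
qed

lemma split_sum: "wf_term (Sum ys) \<Longrightarrow> \<exists>t1 t2. wf_term t1 \<and> wf_term t2 \<and> Sum ys = plus t1 t2"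
proof -
  assume w: "wf_term (Sum ys)"
  then obtain y1 y2 rest where ys: "ys = y1 # y2 # rest"
    by (metis One_nat_def Suc_1 Suc_le_length_iff wf_term.simps(3))
  show ?thesis
  proof (cases rest)
    case Nil
    then show ?thesis using w ys
      by (intro exI[of _ y1] exI[of _ y2]) (cases y1; cases y2; auto simp: plus_def)
  next
    case (Cons z zs)
    then show ?thesis using w ys
      by (intro exI[of _ y1] exI[of _ "Sum (y2 # rest)"]) (cases y1; auto simp: plus_def)
  qed
qed

lemma redex_PS: "wf_term (Sum ys) \<Longrightarrow> wf_term y \<Longrightarrow> \<not> is_prod y \<Longrightarrow> redex ge (Prod [Sum ys, y])"
proof -
  assume a: "wf_term (Sum ys)" "wf_term y" "\<not> is_prod y"
  obtain t1 t2 where t: "wf_term t1" "wf_term t2" "Sum ys = plus t1 t2" using split_sum[OF a(1)] by blast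
  have "Prod [Sum ys, y] = times (plus t1 t2) y" using a(3) t(3)
    by (cases y) (auto simp: times_def plus_def)
  then show ?thesis unfolding redex_def using t a by blast
qed

lemma redex_SP: "wf_term (Sum ys) \<Longrightarrow> wf_term y \<Longrightarrow> \<not> is_prod y \<Longrightarrow> redex ge (Prod [y, Sum ys])"
proof -
  assume a: "wf_term (Sum ys)" "wf_term y" "\<not> is_prod y"
  obtain t1 t2 where t: "wf_term t1" "wf_term t2" "Sum ys = plus t1 t2" using split_sum[OF a(1)] by blast
  have "Prod [y, Sum ys] = times y (plus t1 t2)" using a(3) t(3)
    by (cases y) (auto simp: times_def plus_def)
  then show ?thesis unfolding redex_def using t a by blast
qed

lemma redex_AS: "wf_term (Sum ys) \<Longrightarrow> redex ge (App f (Sum ys))"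
proof -
  assume a: "wf_term (Sum ys)"
  obtain t1 t2 where t: "wf_term t1" "wf_term t2" "Sum ys = plus t1 t2" using split_sum[OF a(1)] by blast
  then show ?thesis unfolding redex_def by metis
qed

lemma redex_P0: "wf_term y \<Longrightarrow> \<not> is_prod y \<Longrightarrow> redex ge (Prod [Cst 0, y])"
proof -
  assume a: "wf_term y" "\<not> is_prod y"
  have "Prod [Cst 0, y] = times (Cst 0) y" using a by (cases y) (auto simp: times_def)
  then show ?thesis unfolding redex_def using a by blast
qed

lemma redex_0P: "wf_term y \<Longrightarrow> \<not> is_prod y \<Longrightarrow> redex ge (Prod [y, Cst 0])"
proof -
  assume a: "wf_term y" "\<not> is_prod y"
  have "Prod [y, Cst 0] = times y (Cst 0)" using a by (cases y) (auto simp: times_def)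
  then show ?thesis unfolding redex_def using a by blast
qed

lemma redex_S0: "wf_term y \<Longrightarrow> \<not> is_sum y \<Longrightarrow> redex ge (Sum [Cst 0, y])"
proof -
  assume a: "wf_term y" "\<not> is_sum y"
  have "Sum [Cst 0, y] = plus (Cst 0) y" using a by (cases y) (auto simp: plus_def)
  then show ?thesis unfolding redex_def using a by blast
qed

lemma redex_0S: "wf_term y \<Longrightarrow> \<not> is_sum y \<Longrightarrow> redex ge (Sum [y, Cst 0])"
proof -
  assume a: "wf_term y" "\<not> is_sum y"
  have "Sum [y, Cst 0] = plus y (Cst 0)" using a by (cases y) (auto simp: plus_def)
  then show ?thesis unfolding redex_def using a by blast
qed

lemma redex_SS: "wf_term y \<Longrightarrow> \<not> is_sum y \<Longrightarrow> redex ge (Sum [y, y])"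
proof -
  assume a: "wf_term y" "\<not> is_sum y"
  have "Sum [y, y] = plus y y" using a by (cases y) (auto simp: plus_def)
  then show ?thesis unfolding redex_def using a by blast
qed

lemma prod_elems:
  assumes w: "wf_term (Prod xs)" and nf: "normal_form ge (Prod xs)" and x: "x \<in> set xs"
  shows "\<not> is_sum x \<and> x \<noteq> Cst 0"
proof -
  obtain i where i: "Suc i < length xs" "xs ! i = x \<or> xs ! Suc i = x"
    using neighbor[of xs x] w x by auto
  have nr: "\<not> redex ge (Prod [xs ! i, xs ! Suc i])" using nf_Prod_adj[OF nf i(1)] .
  have wi: "wf_term (xs ! i)" "\<not> is_prod (xs ! i)" "wf_term (xs ! Suc i)" "\<not> is_prod (xs ! Suc i)"
    using w i(1) by (auto dest: nth_mem)
  show ?thesis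
  proof (intro conjI notI)
    assume s: "is_sum x"
    then obtain ys where ys: "x = Sum ys" by (cases x) auto
    have "wf_term (Sum ys)" using w x ys by auto
    then show False using i(2) nr wi ys redex_PS redex_SP by metis
  next
    assume "x = Cst 0"
    then show False using i(2) nr wi redex_P0 redex_0P by metis
  qed
qed

lemma sum_elems:
  assumes w: "wf_term (Sum xs)" and nf: "normal_form ge (Sum xs)" and x: "x \<in> set xs"
  shows "x \<noteq> Cst 0"
proof
  assume x0: "x = Cst 0"
  obtain i where i: "Suc i < length xs" "xs ! i = x \<or> xs ! Suc i = x"
    using neighbor[of xs x] w x by auto
  have nr: "\<not> redex ge (Sum [xs ! i, xs ! Suc i])" using nf_Sum_adj[OF nf i(1)] .
  have wi: "wf_term (xs ! i)" "\<not> is_sum (xs ! i)" "wf_term (xs ! Suc i)" "\<not> is_sum (xs ! Suc i)"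
    using w i(1) by (auto dest: nth_mem)
  show False using i(2) nr wi redex_S0 redex_0S x0 by metis
qed

lemma no_plus_nf: "wf_term t \<Longrightarrow> normal_form ge t \<Longrightarrow> \<not> is_sum t \<Longrightarrow> no_plus t"
proof (induction t)
  case (Prod xs)
  show ?case
  proof (simp, intro ballI)
    fix x assume x: "x \<in> set xs"
    then show "no_plus x" using Prod.IH[OF x] Prod.prems prod_elems[OF Prod.prems(1,2) x] nf_Prod
      by auto
  qed
next
  case (App f t)
  have "\<not> is_sum t"
  proof
    assume "is_sum t"
    then obtain ys where "t = Sum ys" by (cases t) auto
    then show False using App.prems nf_self[of "App f t" ge] redex_AS by fastforce
  qed
  then show ?case using App.IH App.prems nf_App[OF App.prems(2)] by simp
qed auto

lemma monomial_nf:
  assumes "wf_term m" "no_plus m" "normal_form ge m" "m \<noteq> Cst 0"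
  shows "is_monomial m \<and> sort_by (ge_l ge) (prod_args m) = prod_args m"
proof (cases m)
  case (Prod xs)
  obtain a b rest where xs: "xs = a # b # rest" using assms(1) Prod
    by (metis One_nat_def Suc_1 Suc_le_length_iff wf_term.simps(4))
  have fac: "\<forall>x\<in>set xs. is_factor x \<and> x \<noteq> Cst 0"
  proof
    fix x assume x: "x \<in> set xs"
    have "x \<noteq> Cst 0" using prod_elems[of xs ge x] assms Prod x by auto
    moreover have "is_factor x" using assms(1,2) Prod x by (cases x) auto
    ultimately show "is_factor x \<and> x \<noteq> Cst 0" by blast
  qed
  have "is_monomial m" unfolding is_monomial_def using fac xs Prod
    by (intro exI[of _ xs]) auto
  moreover have "sort_by (ge_l ge) xs = xs"
    using nf_self[of m ge] assms Prod fac unfolding redex_def by blast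
  ultimately show ?thesis using Prod by simp
next
  case (App f t)
  then show ?thesis using assms unfolding is_monomial_def
    by (auto simp: sort_by_def intro!: exI[of _ "[m]"])
next
  case (Cst c)
  then show ?thesis using assms unfolding is_monomial_def
    by (auto simp: sort_by_def intro!: exI[of _ "[m]"])
next
  case (Var c)
  then show ?thesis using assms unfolding is_monomial_def
    by (auto simp: sort_by_def intro!: exI[of _ "[m]"])
qed (use assms in auto)

lemma factors_sorted:
  assumes "total_order ge" "wf_term m" "no_plus m" "sort_by (ge_l ge) (prod_args m) = prod_args m"
  shows "successively (ge_l ge) (prod_args m)"
proof -
  have "successively (ge_l ge) (sort_by (ge_l ge) (prod_args m))"
    using prod_args_PF[OF assms(2,3)] gel_total'[OF assms(1)] by (intro sort_by_succ) blast
  then show ?thesis using assms(4) by simp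
qed

lemma prod_args_inj: "wf_term m \<Longrightarrow> wf_term m' \<Longrightarrow> prod_args m = prod_args m' \<Longrightarrow> m = m'"
  by (cases m; cases m') auto

theorem lemma1:
  fixes ge :: "('a::{finite,field}, 'v, 'f::finite) sym \<Rightarrow> ('a, 'v, 'f) sym \<Rightarrow> bool"
    and n :: nat
    and \<tau> :: "('a, 'v, 'f) trm"
  assumes "card (UNIV :: 'a set) = 2 ^ n"
    and "total_order ge"
    and "wf_term \<tau>"
    and "normal_form ge \<tau>"
  shows "\<exists>ms. \<tau> = sum_of ms \<and> (\<forall>m\<in>set ms. is_monomial m)
    \<and> (\<forall>i. Suc i < length ms \<longrightarrow> gt_p ge (ms ! i) (ms ! Suc i))
    \<and> (\<forall>m\<in>set ms. \<forall>j. Suc j < length (mfactors m)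
          \<longrightarrow> ge_l ge (mfactors m ! j) (mfactors m ! Suc j))"
proof -
  have tot: "total_order ge" by fact
  have w: "wf_term \<tau>" and nf: "normal_form ge \<tau>" by fact+
  show ?thesis
  proof (cases "is_sum \<tau>")
    case True
    then obtain ys where ys: "\<tau> = Sum ys" by (cases \<tau>) auto
    have wS: "wf_term (Sum ys)" and nS: "normal_form ge (Sum ys)" using w nf ys by auto
    have el: "wf_term m \<and> \<not> is_sum m \<and> no_plus m \<and> is_monomial m
        \<and> sort_by (ge_l ge) (prod_args m) = prod_args m" if m: "m \<in> set ys" for m
    proof -
      have a: "wf_term m" "\<not> is_sum m" using wS m by auto
      have b: "normal_form ge m" using nf_Sum[OF nS m] .
      have c: "no_plus m" using no_plus_nf[OF a(1) b a(2)] .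
      have d: "m \<noteq> Cst 0" using sum_elems[OF wS nS m] .
      show ?thesis using a c monomial_nf[OF a(1) c b d] by blast
    qed
    have allmon: "\<forall>m\<in>set ys. is_monomial m" using el by blast
    have srt: "sort_by (ge_p ge) ys = ys"
      using nf_self[OF wS nS] allmon unfolding redex_def by blast
    have totp: "ge_p ge m m' \<or> ge_p ge m' m" if "m \<in> set ys" "m' \<in> set ys" for m m'
      unfolding ge_p_def gep_with_def
    proof (rule lex_ge_total)
      fix x y
      assume "x \<in> set (sort_by (ge_l ge) (prod_args m))" "y \<in> set (sort_by (ge_l ge) (prod_args m'))"
      then have "x \<in> set (prod_args m)" "y \<in> set (prod_args m')" by (auto simp: set_sort_by)
      then have "PF x" "PF y" using prod_args_PF el that by blast+
      then show "ge_l ge x y \<or> ge_l ge y x" using gel_total'[OF tot] by blast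
    qed
    have succ: "successively (ge_p ge) ys"
      using sort_by_succ[of ys "ge_p ge"] totp srt by metis
    have gt: "gt_p ge (ys ! i) (ys ! Suc i)" if i: "Suc i < length ys" for i
    proof -
      have m1: "ys ! i \<in> set ys" "ys ! Suc i \<in> set ys" using i by auto
      have "ge_p ge (ys ! i) (ys ! Suc i)" using succ_nth[OF succ i] .
      moreover have "sort_by (ge_l ge) (prod_args (ys ! i)) \<noteq> sort_by (ge_l ge) (prod_args (ys ! Suc i))"
      proof
        assume "sort_by (ge_l ge) (prod_args (ys ! i)) = sort_by (ge_l ge) (prod_args (ys ! Suc i))"
        then have "prod_args (ys ! i) = prod_args (ys ! Suc i)" using el m1 by metis
        then have eq: "ys ! i = ys ! Suc i" using prod_args_inj el m1 by metis
        have "\<not> redex ge (Sum [ys ! i, ys ! Suc i])" using nf_Sum_adj[OF nS i] .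
        then show False using eq redex_SS el m1 by metis
      qed
      ultimately show ?thesis unfolding gt_p_def by blast
    qed
    have fs: "\<forall>m\<in>set ys. \<forall>j. Suc j < length (mfactors m) \<longrightarrow> ge_l ge (mfactors m ! j) (mfactors m ! Suc j)"
      using el factors_sorted[OF tot] succ_nth by metis
    obtain a b rest where abr: "ys = a # b # rest" using wS
      by (metis One_nat_def Suc_1 Suc_le_length_iff wf_term.simps(3))
    have "\<tau> = sum_of ys" using ys abr by simp
    then show ?thesis using allmon gt fs by blast
  next
    case False
    show ?thesis
    proof (cases "\<tau> = Cst 0")
      case True
      then show ?thesis by (intro exI[of _ "[]"]) simp
    next
      case nz: False
      have np: "no_plus \<tau>" using no_plus_nf[OF w nf False] .
      have mon: "is_monomial \<tau>" and srt: "sort_by (ge_l ge) (prod_args \<tau>) = prod_args \<tau>"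
        using monomial_nf[OF w np nf nz] by blast+
      have "successively (ge_l ge) (prod_args \<tau>)" using factors_sorted[OF tot w np srt] .
      then show ?thesis using mon succ_nth
        by (intro exI[of _ "[\<tau>]"]) auto
    qed
  qed
qed

end
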